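(* Let $V=\mathbb R^{2n}$ with basis $e_1,\dots,e_n,e_1',\dots,e_n'$ and scalar product $\langle\cdot,\cdot\rangle$ of signature $(n,n)$ given by $\langle e_i,e_j\rangle=\delta_{ij}$, $\langle e_i',e_j'\rangle=-\delta_{ij}$, $\langle e_i,e_j'\rangle=0$. Let $\Delta_{\mathfrak{so}(n)}\subset\mathfrak{so}(V)$ be the diagonal subalgebra consisting of the endomorphisms $A$ with $Ae_j=\sum_k a_{kj}e_k$ and $Ae_j'=\sum_ka_{kj}e_k'$ for some skew-symmetric real $n\times n$ matrix $(a_{kj})$. Then its generalized first prolongation vanishes: $\Delta_{\mathfrak{so}(n)}^{\langle1\rangle}=0$.
   Context: For a Lie subalgebra $\mathfrak h\subset\mathfrak{so}(V)$, an element $\eta\in V^*\otimes\mathfrak h$ assigns to $u\in V$ an endomorphism $\eta_u\in\mathfrak h$, and we write $\eta(u,v,w)=\langle\eta_uv,w\rangle$ (skew in $v,w$). The generalized first prolongation is $\mathfrak h^{\langle1\rangle}=\{\eta\in V^*\otimes\mathfrak h:\ \eta(u,v,w)+\eta(w,u,v)+\eta(v,w,u)=0\ \text{for all }u,v,w\in V\}$. *)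

theory Defs
  imports "HOL-Analysis.Analysis"
begin

text \<open>V = R^{2n} is modelled as real^'n \<times> real^'n: the pair (x,y) stands for
  sum_i x_i e_i + sum_i y_i e_i'.\<close>

definition scal_nn :: "((real^'n) \<times> (real^'n)) \<Rightarrow> ((real^'n) \<times> (real^'n)) \<Rightarrow> real" where
  "scal_nn p q = fst p \<bullet> fst q - snd p \<bullet> snd q"

definition diag_so :: "(((real^'n) \<times> (real^'n)) \<Rightarrow> ((real^'n) \<times> (real^'n))) set" where
  "diag_so = {A. \<exists>a::real^'n^'n. transpose a = - a \<and>
                 A = (\<lambda>p. (a *v fst p, a *v snd p))}"

definition gen_prolong1 ::
  "('v::real_vector \<Rightarrow> 'v \<Rightarrow> real) \<Rightarrow> ('v \<Rightarrow> 'v) set \<Rightarrow> ('v \<Rightarrow> 'v \<Rightarrow> 'v) set" where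
  "gen_prolong1 B h = {\<eta>.
     (\<forall>u u' v. \<eta> (u + u') v = \<eta> u v + \<eta> u' v) \<and>
     (\<forall>c u v. \<eta> (c *\<^sub>R u) v = c *\<^sub>R \<eta> u v) \<and>
     (\<forall>u. \<eta> u \<in> h) \<and>
     (\<forall>u v w. B (\<eta> u v) w + B (\<eta> w u) v + B (\<eta> v w) u = 0)}"

end

theory Submission
  imports Defs
begin

lemma diag_zero_part:
  assumes h: "\<forall>u. \<eta> u \<in> (diag_so :: (((real^'n) \<times> (real^'n)) \<Rightarrow> ((real^'n) \<times> (real^'n))) set)"
    and cyc: "\<forall>u v w. scal_nn (\<eta> u v) w + scal_nn (\<eta> w u) v + scal_nn (\<eta> v w) u = 0"
  shows "\<eta> (0, y) p = 0" and "\<eta> (x, 0) p = 0"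
proof -
  have rep: "\<exists>a::real^'n^'n. \<eta> u = (\<lambda>p. (a *v fst p, a *v snd p))" for u
    using h unfolding diag_so_def by blast
  obtain a :: "real^'n^'n" where a: "\<eta> (0,y) = (\<lambda>p. (a *v fst p, a *v snd p))"
    using rep by blast
  have "(a *v x1) \<bullet> x2 = 0" for x1 x2
  proof -
    obtain b :: "real^'n^'n" where b: "\<eta> (x2,0) = (\<lambda>p. (b *v fst p, b *v snd p))"
      using rep by blast
    obtain c :: "real^'n^'n" where c: "\<eta> (x1,0) = (\<lambda>p. (c *v fst p, c *v snd p))"
      using rep by blast
    have "scal_nn (\<eta> (0,y) (x1,0)) (x2,0) + scal_nn (\<eta> (x2,0) (0,y)) (x1,0)
          + scal_nn (\<eta> (x1,0) (x2,0)) (0,y) = 0" using cyc by blast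
    then show ?thesis using a b c by (simp add: scal_nn_def)
  qed
  then have "a *v x1 = 0" for x1 by (metis inner_eq_zero_iff)
  then show "\<eta> (0, y) p = 0" using a by (simp add: zero_prod_def)
  obtain a' :: "real^'n^'n" where a': "\<eta> (x,0) = (\<lambda>p. (a' *v fst p, a' *v snd p))"
    using rep by blast
  have "(a' *v y1) \<bullet> y2 = 0" for y1 y2
  proof -
    obtain b :: "real^'n^'n" where b: "\<eta> (0,y2) = (\<lambda>p. (b *v fst p, b *v snd p))"
      using rep by blast
    obtain c :: "real^'n^'n" where c: "\<eta> (0,y1) = (\<lambda>p. (c *v fst p, c *v snd p))"
      using rep by blast
    have "scal_nn (\<eta> (x,0) (0,y1)) (0,y2) + scal_nn (\<eta> (0,y2) (x,0)) (0,y1)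
          + scal_nn (\<eta> (0,y1) (0,y2)) (x,0) = 0" using cyc by blast
    then show ?thesis using a' b c by (simp add: scal_nn_def)
  qed
  then have "a' *v y1 = 0" for y1 by (metis inner_eq_zero_iff)
  then show "\<eta> (x, 0) p = 0" using a' by (simp add: zero_prod_def)
qed

theorem lemma2p19:
  shows "gen_prolong1 scal_nn (diag_so :: (((real^'n) \<times> (real^'n)) \<Rightarrow> ((real^'n) \<times> (real^'n))) set)
           = {\<lambda>u v. 0}"
proof (rule set_eqI, rule iffI)
  fix \<eta> :: "(real^'n) \<times> (real^'n) \<Rightarrow> (real^'n) \<times> (real^'n) \<Rightarrow> (real^'n) \<times> (real^'n)"
  assume "\<eta> \<in> gen_prolong1 scal_nn diag_so"
  then have add: "\<forall>u u' v. \<eta> (u + u') v = \<eta> u v + \<eta> u' v"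
    and h: "\<forall>u. \<eta> u \<in> (diag_so :: (((real^'n) \<times> (real^'n)) \<Rightarrow> ((real^'n) \<times> (real^'n))) set)"
    and cyc: "\<forall>u v w. scal_nn (\<eta> u v) w + scal_nn (\<eta> w u) v + scal_nn (\<eta> v w) u = 0"
    unfolding gen_prolong1_def by auto
  have "\<eta> u p = 0" for u p
  proof -
    obtain x y where u: "u = (x,0) + (0,y)" by (metis add.right_neutral add_0 prod.collapse add_Pair)
    have "\<eta> ((x,0) + (0,y)) p = \<eta> (x,0) p + \<eta> (0,y) p" using add by blast
    then show ?thesis unfolding u using diag_zero_part[OF h cyc] by simp
  qed
  then show "\<eta> \<in> {\<lambda>u v. 0}" by (simp add: fun_eq_iff)
next
  fix \<eta> :: "(real^'n) \<times> (real^'n) \<Rightarrow> (real^'n) \<times> (real^'n) \<Rightarrow> (real^'n) \<times> (real^'n)"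
  assume "\<eta> \<in> {\<lambda>u v. 0}"
  then have e: "\<eta> = (\<lambda>u v. 0)" by simp
  have "(\<lambda>v. 0) \<in> (diag_so :: (((real^'n) \<times> (real^'n)) \<Rightarrow> ((real^'n) \<times> (real^'n))) set)"
    unfolding diag_so_def
    by (rule CollectI, rule exI[of _ 0]) (auto simp: zero_prod_def transpose_def vec_eq_iff)
  then show "\<eta> \<in> gen_prolong1 scal_nn diag_so"
    unfolding e gen_prolong1_def by (simp add: scal_nn_def zero_prod_def)
qed

end
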